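(* Let $K\ge1$, $x_1,\dots,x_n\in\mathbb{R}^p$, $\mathsf y_1,\dots,\mathsf y_n\in\mathbb{R}^{K+1}$, and suppose a minimizer $\hat{\mathsf B}$ of $\sum_i\mathcal L_i(\mathsf B^Tx_i)$ over $\mathsf B\in\mathbb{R}^{p\times(K+1)}$ exists and that $\sum_{l=1}^nH_l\otimes(x_lx_l^T)$ is invertible, where $\hat B=\hat{\mathsf B}Q$. Then $V_i=Q^T\mathsf V_iQ$ for every $i\in[n]$.
   Context: $Q\in\mathbb{R}^{(K+1)\times K}$ satisfies $QQ^T=I_{K+1}-\frac{1}{K+1}\mathbf 1\mathbf 1^T$, $Q^TQ=I_K$. $\mathcal L_i(u)=-\sum_k\mathsf y_{ik}u_k+\log\sum_{k'}e^{u_{k'}}$. $\hat{\mathsf p}_{ik}=\exp(x_i^T\hat{\mathsf B}e_k)/\sum_{k'}\exp(x_i^T\hat{\mathsf B}e_{k'})$, $\mathsf H_i=\operatorname{diag}(\hat{\mathsf p}_i)-\hat{\mathsf p}_i\hat{\mathsf p}_i^T$, $\mathsf V_i=\mathsf H_i-(\mathsf H_i\otimes x_i^T)[\sum_l\mathsf H_l\otimes(x_lx_l^T)]^\dagger(\mathsf H_i\otimes x_i)$ ($\dagger$ = Moore–Penrose inverse). $H_i=Q^T\mathsf H_iQ$ (the Hessian of $u\mapsto\mathcal L_i(Qu)$ at $\hat B^Tx_i$), $V_i=H_i-(H_i\otimes x_i^T)[\sum_lH_l\otimes(x_lx_l^T)]^{-1}(H_i\otimes x_i)$. *)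

theory Defs
  imports Complex_Main "Jordan_Normal_Form.Matrix" "Jordan_Normal_Form.Gauss_Jordan_Elimination"
begin

definition kron :: "real mat \<Rightarrow> real mat \<Rightarrow> real mat" where
  "kron A B = mat (dim_row A * dim_row B) (dim_col A * dim_col B)
     (\<lambda>(i,j). A $$ (i div dim_row B, j div dim_col B) * B $$ (i mod dim_row B, j mod dim_col B))"

definition msum :: "nat \<Rightarrow> nat \<Rightarrow> ('i \<Rightarrow> real mat) \<Rightarrow> 'i set \<Rightarrow> real mat" where
  "msum nr nc f I = mat nr nc (\<lambda>ij. \<Sum>l\<in>I. f l $$ ij)"

definition pinv :: "real mat \<Rightarrow> real mat" where
  "pinv A = (THE X. X \<in> carrier_mat (dim_col A) (dim_row A) \<and> A * X * A = A \<and> X * A * X = X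
              \<and> transpose_mat (A * X) = A * X \<and> transpose_mat (X * A) = X * A)"

definition colm :: "real vec \<Rightarrow> real mat" where
  "colm v = mat (dim_vec v) 1 (\<lambda>(i,j). v $ i)"
definition rowm :: "real vec \<Rightarrow> real mat" where
  "rowm v = mat 1 (dim_vec v) (\<lambda>(i,j). v $ j)"

definition mlloss :: "real vec \<Rightarrow> real vec \<Rightarrow> real" where
  "mlloss y u = - (\<Sum>k<dim_vec u. y $ k * u $ k) + ln (\<Sum>k<dim_vec u. exp (u $ k))"

definition phat :: "real mat \<Rightarrow> real vec \<Rightarrow> nat \<Rightarrow> real" where
  "phat B x k = exp (x \<bullet> col B k) / (\<Sum>k'<dim_col B. exp (x \<bullet> col B k'))"

definition Hsf :: "real mat \<Rightarrow> real vec \<Rightarrow> real mat" where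
  "Hsf B x = mat (dim_col B) (dim_col B)
     (\<lambda>(a,b). (if a = b then phat B x a else 0) - phat B x a * phat B x b)"

end

theory Submission
  imports Defs
begin


lemma kron_dims[simp]: "dim_row (kron A B) = dim_row A * dim_row B" "dim_col (kron A B) = dim_col A * dim_col B"
  unfolding kron_def by auto

lemma kron_index[simp]: "i < dim_row A * dim_row B \<Longrightarrow> j < dim_col A * dim_col B \<Longrightarrow>
  kron A B $$ (i,j) = A $$ (i div dim_row B, j div dim_col B) * B $$ (i mod dim_row B, j mod dim_col B)"
  unfolding kron_def by auto

lemma kron_carrier[simp,intro]: "A \<in> carrier_mat a b \<Longrightarrow> B \<in> carrier_mat c d \<Longrightarrow> kron A B \<in> carrier_mat (a*c) (b*d)"
  unfolding carrier_mat_def by auto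

lemma sum_split_prod: "(\<Sum>k<b*d. g k) = (\<Sum>u<b. \<Sum>v<d. g (u*d+v))" for g :: "nat \<Rightarrow> real"
proof (cases "d = 0")
  case True then show ?thesis by simp
next
  case False
  have "(\<Sum>k<b*d. g k) = (\<Sum>(u,v)\<in>{..<b}\<times>{..<d}. g (u*d+v))"
  proof (rule sum.reindex_bij_witness[of _ "\<lambda>(u,v). u*d+v" "\<lambda>k. (k div d, k mod d)"])
    fix a assume "a \<in> {..<b} \<times> {..<d}"
    then obtain u v where a: "a = (u,v)" "u < b" "v < d" by auto
    have "u*d+v < (u+1)*d" using a by simp
    also have "\<dots> \<le> b*d" using a by (intro mult_right_mono) auto
    finally show "(case a of (u, v) \<Rightarrow> u * d + v) \<in> {..<b * d}" using a by simp
    show "((case a of (u, v) \<Rightarrow> u * d + v) div d, (case a of (u, v) \<Rightarrow> u * d + v) mod d) = a"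
      using a False by simp
  next
    fix k assume k: "k \<in> {..<b*d}"
    show "(case (k div d, k mod d) of (u, v) \<Rightarrow> u * d + v) = k" by simp
    show "(k div d, k mod d) \<in> {..<b} \<times> {..<d}" using k False
      by (auto simp: less_mult_imp_div_less)
    show "(case (k div d, k mod d) of (u, v) \<Rightarrow> g (u * d + v)) = g k" by simp
  qed
  also have "\<dots> = (\<Sum>u<b. \<Sum>v<d. g (u*d+v))" by (simp add: sum.cartesian_product)
  finally show ?thesis .
qed

lemma kron_mult:
  assumes A: "A \<in> carrier_mat a b" and B: "B \<in> carrier_mat c d"
    and C: "C \<in> carrier_mat b e" and D: "D \<in> carrier_mat d f"
  shows "kron A B * kron C D = kron (A * C) (B * D)"
proof (rule eq_matI)
  fix i j assume i: "i < dim_row (kron (A * C) (B * D))" and j: "j < dim_col (kron (A * C) (B * D))"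
  have i': "i < a*c" and j': "j < e*f" using i j A B C D by auto
  have c0: "c > 0" and f0: "f > 0" using i' j' by (auto intro: ccontr)
  have id: "i div c < a" "i mod c < c" "j div f < e" "j mod f < f"
    using i' j' c0 f0 by (auto simp: less_mult_imp_div_less)
  have "(kron A B * kron C D) $$ (i,j) = (\<Sum>k<b*d. kron A B $$ (i,k) * kron C D $$ (k,j))"
    using A B C D i' j' by (simp add: scalar_prod_def lessThan_atLeast0)
  also have "\<dots> = (\<Sum>u<b. \<Sum>v<d. kron A B $$ (i,u*d+v) * kron C D $$ (u*d+v,j))"
    by (rule sum_split_prod)
  also have "\<dots> = (\<Sum>u<b. \<Sum>v<d. (A $$ (i div c, u) * C $$ (u, j div f)) * (B $$ (i mod c, v) * D $$ (v, j mod f)))"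
  proof (intro sum.cong refl)
    fix u v assume u: "u \<in> {..<b}" and v: "v \<in> {..<d}"
    have "u*d+v < (u+1)*d" using v by simp
    also have "\<dots> \<le> b*d" using u by (intro mult_right_mono) auto
    finally have lt: "u*d+v < b*d" .
    have dd: "(u*d+v) div d = u" "(u*d+v) mod d = v" using v by auto
    show "kron A B $$ (i,u*d+v) * kron C D $$ (u*d+v,j) = (A $$ (i div c, u) * C $$ (u, j div f)) * (B $$ (i mod c, v) * D $$ (v, j mod f))"
      using A B C D i' j' lt dd by simp
  qed
  also have "\<dots> = (\<Sum>u<b. A $$ (i div c, u) * C $$ (u, j div f)) * (\<Sum>v<d. B $$ (i mod c, v) * D $$ (v, j mod f))"
    by (simp add: sum_product)
  also have "\<dots> = kron (A * C) (B * D) $$ (i,j)"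
    using A B C D i' j' id by (simp add: scalar_prod_def lessThan_atLeast0)
  finally show "(kron A B * kron C D) $$ (i,j) = kron (A * C) (B * D) $$ (i,j)" .
qed (insert A B C D, auto)

lemma kron_one_right: "kron A (1\<^sub>m 1) = A"
  by (rule eq_matI) auto

lemma kron_one_one: "kron (1\<^sub>m a) (1\<^sub>m b) = 1\<^sub>m (a*b)"
proof (rule eq_matI)
  fix i j assume i: "i < dim_row (1\<^sub>m (a*b))" and j: "j < dim_col (1\<^sub>m (a*b) :: real mat)"
  then have b0: "b > 0" by (auto intro: ccontr)
  have "(i div b = j div b \<and> i mod b = j mod b) = (i = j)"
    by (metis div_mult_mod_eq)
  then show "kron (1\<^sub>m a) (1\<^sub>m b) $$ (i, j) = 1\<^sub>m (a*b) $$ (i, j)"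
    using i j b0 by (auto simp: less_mult_imp_div_less)
qed auto

lemma kron_transpose: "transpose_mat (kron A B) = kron (transpose_mat A) (transpose_mat B)"
proof (rule eq_matI)
  fix i j assume i: "i < dim_row (kron (transpose_mat A) (transpose_mat B))" and j: "j < dim_col (kron (transpose_mat A) (transpose_mat B))"
  then have c0: "dim_row B > 0" "dim_col B > 0" by (auto intro: ccontr)
  then show "transpose_mat (kron A B) $$ (i,j) = kron (transpose_mat A) (transpose_mat B) $$ (i,j)"
    using i j by (simp add: less_mult_imp_div_less)
qed auto



lemma msum_carrier[simp,intro]: "msum nr nc f I \<in> carrier_mat nr nc"
  unfolding msum_def by auto

lemma msum_mult_left:
  assumes A: "A \<in> carrier_mat m nr" and f: "\<And>l. l \<in> I \<Longrightarrow> f l \<in> carrier_mat nr nc"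
  shows "A * msum nr nc f I = msum m nc (\<lambda>l. A * f l) I"
proof (rule eq_matI)
  fix i j assume i: "i < dim_row (msum m nc (\<lambda>l. A * f l) I)" and j: "j < dim_col (msum m nc (\<lambda>l. A * f l) I)"
  then have i': "i < m" and j': "j < nc" unfolding msum_def by auto
  have "(A * msum nr nc f I) $$ (i,j) = (\<Sum>k<nr. A $$ (i,k) * (\<Sum>l\<in>I. f l $$ (k,j)))"
    using A i' j' by (simp add: msum_def scalar_prod_def lessThan_atLeast0)
  also have "\<dots> = (\<Sum>l\<in>I. \<Sum>k<nr. A $$ (i,k) * f l $$ (k,j))"
    by (simp add: sum_distrib_left sum.swap[of _ I])
  also have "\<dots> = (\<Sum>l\<in>I. (A * f l) $$ (i,j))"
  proof (rule sum.cong[OF refl])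
    fix l assume "l \<in> I"
    then have "f l \<in> carrier_mat nr nc" by (rule f)
    then show "(\<Sum>k<nr. A $$ (i,k) * f l $$ (k,j)) = (A * f l) $$ (i,j)"
      using A i' j' by (simp add: scalar_prod_def lessThan_atLeast0)
  qed
  also have "\<dots> = msum m nc (\<lambda>l. A * f l) I $$ (i,j)" using i' j' by (simp add: msum_def)
  finally show "(A * msum nr nc f I) $$ (i,j) = msum m nc (\<lambda>l. A * f l) I $$ (i,j)" .
qed (insert A, auto simp: msum_def)

lemma msum_mult_right:
  assumes A: "A \<in> carrier_mat nc m" and f: "\<And>l. l \<in> I \<Longrightarrow> f l \<in> carrier_mat nr nc"
  shows "msum nr nc f I * A = msum nr m (\<lambda>l. f l * A) I"
proof (rule eq_matI)
  fix i j assume i: "i < dim_row (msum nr m (\<lambda>l. f l * A) I)" and j: "j < dim_col (msum nr m (\<lambda>l. f l * A) I)"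
  then have i': "i < nr" and j': "j < m" unfolding msum_def by auto
  have "(msum nr nc f I * A) $$ (i,j) = (\<Sum>k<nc. (\<Sum>l\<in>I. f l $$ (i,k)) * A $$ (k,j))"
    using A i' j' by (simp add: msum_def scalar_prod_def lessThan_atLeast0)
  also have "\<dots> = (\<Sum>l\<in>I. \<Sum>k<nc. f l $$ (i,k) * A $$ (k,j))"
    by (simp add: sum_distrib_right sum.swap[of _ I])
  also have "\<dots> = (\<Sum>l\<in>I. (f l * A) $$ (i,j))"
  proof (rule sum.cong[OF refl])
    fix l assume "l \<in> I"
    then have "f l \<in> carrier_mat nr nc" by (rule f)
    then show "(\<Sum>k<nc. f l $$ (i,k) * A $$ (k,j)) = (f l * A) $$ (i,j)"
      using A i' j' by (simp add: scalar_prod_def lessThan_atLeast0)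
  qed
  also have "\<dots> = msum nr m (\<lambda>l. f l * A) I $$ (i,j)" using i' j' by (simp add: msum_def)
  finally show "(msum nr nc f I * A) $$ (i,j) = msum nr m (\<lambda>l. f l * A) I $$ (i,j)" .
qed (insert A, auto simp: msum_def)

lemma msum_cong: "(\<And>l. l \<in> I \<Longrightarrow> f l = g l) \<Longrightarrow> msum nr nc f I = msum nr nc g I"
  unfolding msum_def by (auto intro!: sum.cong)



definition penrose :: "real mat \<Rightarrow> real mat \<Rightarrow> bool" where
  "penrose A X \<longleftrightarrow> X \<in> carrier_mat (dim_col A) (dim_row A) \<and> A * X * A = A \<and> X * A * X = X
              \<and> transpose_mat (A * X) = A * X \<and> transpose_mat (X * A) = X * A"

lemma penrose_unique:
  assumes A: "A \<in> carrier_mat m k" and X: "penrose A X" and Y: "penrose A Y"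
  shows "X = Y"
proof -
  have Xc: "X \<in> carrier_mat k m" and Yc: "Y \<in> carrier_mat k m" using X Y A unfolding penrose_def by auto
  have X1: "A * X * A = A" "X * A * X = X" "transpose_mat (A * X) = A * X" "transpose_mat (X * A) = X * A"
    using X unfolding penrose_def by auto
  have Y1: "A * Y * A = A" "Y * A * Y = Y" "transpose_mat (A * Y) = A * Y" "transpose_mat (Y * A) = Y * A"
    using Y unfolding penrose_def by auto
  have AX: "A * X \<in> carrier_mat m m" and XA: "X * A \<in> carrier_mat k k"
   and AY: "A * Y \<in> carrier_mat m m" and YA: "Y * A \<in> carrier_mat k k"
   and At: "transpose_mat A \<in> carrier_mat k m" and Xt: "transpose_mat X \<in> carrier_mat m k"
   and Yt: "transpose_mat Y \<in> carrier_mat m k"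
    using A Xc Yc by auto
  have e1: "transpose_mat X * transpose_mat A = A * X" using transpose_mult[OF A Xc] X1(3) by simp
  have e2: "transpose_mat A * transpose_mat Y = Y * A" using transpose_mult[OF Yc A] Y1(4) by simp
  have e3: "transpose_mat A = transpose_mat A * (A * Y)"
    using transpose_mult[OF AY A] Y1(1) Y1(3) by simp
  have e4: "transpose_mat A = (X * A) * transpose_mat A"
  proof -
    have "A = A * (X * A)" using X1(1) assoc_mult_mat[OF A Xc A] by simp
    then have "transpose_mat A = transpose_mat (A * (X * A))" by simp
    also have "\<dots> = transpose_mat (X * A) * transpose_mat A" by (rule transpose_mult[OF A XA])
    finally show ?thesis using X1(4) by simp
  qed
  have "X = X * (A * X)" using X1(2) assoc_mult_mat[OF Xc A Xc] by simp
  also have "\<dots> = X * (transpose_mat X * transpose_mat A)" using e1 by simp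
  also have "\<dots> = X * (transpose_mat X * (transpose_mat A * (A * Y)))" using e3 by simp
  also have "\<dots> = X * ((transpose_mat X * transpose_mat A) * (A * Y))"
    using assoc_mult_mat[OF Xt At AY] by simp
  also have "\<dots> = X * ((A * X) * (A * Y))" using e1 by simp
  also have "\<dots> = (X * (A * X)) * (A * Y)" using assoc_mult_mat[OF Xc AX AY] by simp
  also have "X * (A * X) = X" using X1(2) assoc_mult_mat[OF Xc A Xc] by simp
  finally have 1: "X = X * (A * Y)" .
  have "Y = (Y * A) * Y" using Y1(2) by simp
  also have "\<dots> = (transpose_mat A * transpose_mat Y) * Y" using e2 by simp
  also have "\<dots> = (((X * A) * transpose_mat A) * transpose_mat Y) * Y" using e4 by simp
  also have "((X * A) * transpose_mat A) * transpose_mat Y = (X * A) * (transpose_mat A * transpose_mat Y)"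
    using assoc_mult_mat[OF XA At Yt] by simp
  also have "\<dots> = (X * A) * (Y * A)" using e2 by simp
  also have "\<dots> * Y = (X * A) * ((Y * A) * Y)" using assoc_mult_mat[OF XA YA Yc] by simp
  also have "(Y * A) * Y = Y" using Y1(2) by simp
  also have "(X * A) * Y = X * (A * Y)" using assoc_mult_mat[OF Xc A Yc] by simp
  finally show ?thesis using 1 by simp
qed

lemma pinv_eq:
  assumes A: "A \<in> carrier_mat m k" and X: "penrose A X"
  shows "pinv A = X"
proof -
  have "pinv A = (THE X. penrose A X)" unfolding pinv_def penrose_def by (rule refl)
  also have "\<dots> = X"
    by (rule the_equality[where P="penrose A", OF X]) (rule penrose_unique[OF A _ X])
  finally show ?thesis .
qed



lemma phat_sum: assumes "dim_col B > 0" shows "(\<Sum>k<dim_col B. phat B x k) = 1"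
proof -
  have pos: "(\<Sum>k'<dim_col B. exp (x \<bullet> col B k')) > 0"
    using assms by (intro sum_pos) auto
  show ?thesis unfolding phat_def using pos by (simp add: sum_divide_distrib[symmetric])
qed

lemma Hsf_carrier[simp,intro]: "Hsf B x \<in> carrier_mat (dim_col B) (dim_col B)"
  unfolding Hsf_def by auto

lemma Hsf_colsum: assumes b: "b < dim_col B"
  shows "(\<Sum>a<dim_col B. Hsf B x $$ (a,b)) = 0"
proof -
  have "(\<Sum>a<dim_col B. Hsf B x $$ (a,b)) = (\<Sum>a<dim_col B. (if a = b then phat B x a else 0) - phat B x a * phat B x b)"
    using b unfolding Hsf_def by (intro sum.cong) auto
  also have "\<dots> = phat B x b - (\<Sum>a<dim_col B. phat B x a) * phat B x b"
    using b by (simp add: sum_subtractf sum_distrib_right)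
  also have "\<dots> = 0" using b phat_sum[of B x] by simp
  finally show ?thesis .
qed

lemma Hsf_rowsum: assumes a: "a < dim_col B"
  shows "(\<Sum>b<dim_col B. Hsf B x $$ (a,b)) = 0"
proof -
  have "(\<Sum>b<dim_col B. Hsf B x $$ (a,b)) = (\<Sum>b<dim_col B. (if a = b then phat B x a else 0) - phat B x a * phat B x b)"
    using a unfolding Hsf_def by (intro sum.cong) auto
  also have "\<dots> = phat B x a - phat B x a * (\<Sum>b<dim_col B. phat B x b)"
    using a by (simp add: sum_subtractf sum_distrib_left)
  also have "\<dots> = 0" using a phat_sum[of B x] by simp
  finally show ?thesis .
qed

lemma proj_left:
  fixes H :: "real mat" assumes H: "H \<in> carrier_mat N N" and cs: "\<And>b. b < N \<Longrightarrow> (\<Sum>a<N. H $$ (a,b)) = 0"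
  shows "(1\<^sub>m N - c \<cdot>\<^sub>m mat N N (\<lambda>_. 1)) * H = H"
proof (rule eq_matI)
  fix i j assume i: "i < dim_row H" and j: "j < dim_col H"
  have "((1\<^sub>m N - c \<cdot>\<^sub>m mat N N (\<lambda>_. 1)) * H) $$ (i,j) = (\<Sum>k<N. ((if i = k then 1 else 0) - c) * H $$ (k,j))"
    using H i j by (auto simp: scalar_prod_def lessThan_atLeast0 intro!: sum.cong)
  also have "\<dots> = (\<Sum>k<N. (if i = k then H $$ (k,j) else 0)) - c * (\<Sum>k<N. H $$ (k,j))"
  proof -
    have "(\<Sum>k<N. ((if i = k then 1 else 0) - c) * H $$ (k,j)) = (\<Sum>k<N. (if i = k then H $$ (k,j) else 0) - c * H $$ (k,j))"
      by (intro sum.cong) (auto simp: algebra_simps)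
    then show ?thesis by (simp add: sum_subtractf sum_distrib_left)
  qed
  also have "\<dots> = H $$ (i,j)" using cs[of j] H i j by simp
  finally show "((1\<^sub>m N - c \<cdot>\<^sub>m mat N N (\<lambda>_. 1)) * H) $$ (i,j) = H $$ (i,j)" .
qed (insert H, auto)

lemma proj_right:
  fixes H :: "real mat" assumes H: "H \<in> carrier_mat N N" and rs: "\<And>a. a < N \<Longrightarrow> (\<Sum>b<N. H $$ (a,b)) = 0"
  shows "H * (1\<^sub>m N - c \<cdot>\<^sub>m mat N N (\<lambda>_. 1)) = H"
proof (rule eq_matI)
  fix i j assume i: "i < dim_row H" and j: "j < dim_col H"
  have "(H * (1\<^sub>m N - c \<cdot>\<^sub>m mat N N (\<lambda>_. 1))) $$ (i,j) = (\<Sum>k<N. H $$ (i,k) * ((if k = j then 1 else 0) - c))"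
    using H i j by (auto simp: scalar_prod_def lessThan_atLeast0 intro!: sum.cong)
  also have "\<dots> = (\<Sum>k<N. (if k = j then H $$ (i,k) else 0)) - c * (\<Sum>k<N. H $$ (i,k))"
  proof -
    have "(\<Sum>k<N. H $$ (i,k) * ((if k = j then 1 else 0) - c)) = (\<Sum>k<N. (if k = j then H $$ (i,k) else 0) - c * H $$ (i,k))"
      by (intro sum.cong) (auto simp: algebra_simps)
    then show ?thesis by (simp add: sum_subtractf sum_distrib_left)
  qed
  also have "\<dots> = H $$ (i,j)" using rs[of i] H i j by simp
  finally show "(H * (1\<^sub>m N - c \<cdot>\<^sub>m mat N N (\<lambda>_. 1))) $$ (i,j) = H $$ (i,j)" .
qed (insert H, auto)



lemma invertible_mat_inverse:
  fixes M :: "real mat"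
  assumes Mc: "M \<in> carrier_mat N N" and inv: "invertible_mat M"
  obtains Minv where "M * Minv = 1\<^sub>m N" "Minv * M = 1\<^sub>m N" "Minv \<in> carrier_mat N N" "the (mat_inverse M) = Minv"
proof -
  obtain B where B: "inverts_mat M B" "inverts_mat B M" using inv unfolding invertible_mat_def by auto
  have MB: "M * B = 1\<^sub>m N" using B(1) Mc unfolding inverts_mat_def by auto
  have Bc: "B \<in> carrier_mat N N"
  proof -
    have "dim_col B = N" using arg_cong[OF MB, of dim_col] by simp
    moreover have "dim_row B = N" using B(2) Mc arg_cong[OF B(2)[unfolded inverts_mat_def], of dim_col] by simp
    ultimately show ?thesis by auto
  qed
  have BM: "B * M = 1\<^sub>m N" using B(2) Bc unfolding inverts_mat_def by auto
  have "mat_inverse M \<noteq> None"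
  proof
    assume "mat_inverse M = None"
    from mat_inverse(1)[OF Mc this, of "()"]
    have "M \<notin> Units (ring_mat TYPE(real) N ())" .
    moreover have "M \<in> Units (ring_mat TYPE(real) N ())"
      using Mc Bc MB BM unfolding Units_def ring_mat_def by auto
    ultimately show False by simp
  qed
  then obtain Mi where Mi: "mat_inverse M = Some Mi" by auto
  from mat_inverse(2)[OF Mc Mi] Mi show ?thesis by (intro that) auto
qed

lemma colm_carrier[simp,intro]: "v \<in> carrier_vec p \<Longrightarrow> colm v \<in> carrier_mat p 1"
  unfolding colm_def by auto
lemma rowm_carrier[simp,intro]: "v \<in> carrier_vec p \<Longrightarrow> rowm v \<in> carrier_mat 1 p"
  unfolding rowm_def by auto

lemma L1: fixes P Pt A B :: "real mat"
  assumes P: "P \<in> carrier_mat a b" and Pt: "Pt \<in> carrier_mat b a" and A: "A \<in> carrier_mat b b"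
    and B: "B \<in> carrier_mat b b" and PtP: "Pt * P = 1\<^sub>m b"
  shows "(P * A * Pt) * (P * B * Pt) = P * (A * B) * Pt"
proof -
  have PA: "P * A \<in> carrier_mat a b" using P A by auto
  have PAPt: "P * A * Pt \<in> carrier_mat a a" using PA Pt by auto
  have BPt: "B * Pt \<in> carrier_mat b a" using B Pt by auto
  have AB: "A * B \<in> carrier_mat b b" using A B by auto
  have "(P * A * Pt) * (P * B * Pt) = (P * A * Pt) * (P * (B * Pt))" using assoc_mult_mat[OF P B Pt] by simp
  also have "\<dots> = ((P * A * Pt) * P) * (B * Pt)" using assoc_mult_mat[OF PAPt P BPt] by simp
  also have "(P * A * Pt) * P = (P * A) * (Pt * P)" using assoc_mult_mat[OF PA Pt P] by simp
  also have "\<dots> = P * A" using PtP right_mult_one_mat[OF PA] by simp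
  also have "(P * A) * (B * Pt) = P * (A * (B * Pt))" using assoc_mult_mat[OF P A BPt] by simp
  also have "A * (B * Pt) = (A * B) * Pt" using assoc_mult_mat[OF A B Pt] by simp
  also have "P * ((A * B) * Pt) = P * (A * B) * Pt" using assoc_mult_mat[OF P AB Pt] by simp
  finally show ?thesis .
qed

lemma L2: fixes Qt R P Mi Pt C Q :: "real mat"
  assumes Qt: "Qt \<in> carrier_mat k a" and R: "R \<in> carrier_mat a n" and P: "P \<in> carrier_mat n m"
   and Mi: "Mi \<in> carrier_mat m m" and Pt: "Pt \<in> carrier_mat m n" and C: "C \<in> carrier_mat n a" and Q: "Q \<in> carrier_mat a k"
  shows "Qt * (R * (P * Mi * Pt) * C) * Q = (Qt * R * P) * Mi * (Pt * C * Q)"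
proof -
  have PMi: "P * Mi \<in> carrier_mat n m" using P Mi by auto
  have X: "P * Mi * Pt \<in> carrier_mat n n" using PMi Pt by auto
  have RX: "R * (P * Mi * Pt) \<in> carrier_mat a n" using R X by auto
  have RXC: "R * (P * Mi * Pt) * C \<in> carrier_mat a a" using RX C by auto
  have CQ: "C * Q \<in> carrier_mat n k" using C Q by auto
  have Y: "Pt * (C * Q) \<in> carrier_mat m k" using Pt CQ by auto
  have MiY: "Mi * (Pt * (C * Q)) \<in> carrier_mat m k" using Mi Y by auto
  have PMiY: "P * (Mi * (Pt * (C * Q))) \<in> carrier_mat n k" using P MiY by auto
  have QtR: "Qt * R \<in> carrier_mat k n" using Qt R by auto
  have QtRP: "Qt * R * P \<in> carrier_mat k m" using QtR P by auto
  have "Qt * (R * (P * Mi * Pt) * C) * Q = Qt * (R * (P * (Mi * (Pt * (C * Q)))))"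
    by (simp only: assoc_mult_mat[OF Qt RXC Q] assoc_mult_mat[OF RX C Q] assoc_mult_mat[OF R X CQ]
       assoc_mult_mat[OF PMi Pt CQ] assoc_mult_mat[OF P Mi Y])
  also have "\<dots> = (Qt * R * P) * Mi * (Pt * C * Q)"
    by (simp only: assoc_mult_mat[OF Pt C Q] assoc_mult_mat[OF QtRP Mi Y] assoc_mult_mat[OF QtR P MiY]
       assoc_mult_mat[OF Qt R PMiY])
  finally show ?thesis .
qed

lemma helper:
  fixes Q :: "real mat" and Hs :: "nat \<Rightarrow> real mat" and x :: "nat \<Rightarrow> real vec"
  assumes Q: "Q \<in> carrier_mat (K+1) K"
    and QtQ: "transpose_mat Q * Q = 1\<^sub>m K"
    and Hc: "\<And>l. l < n \<Longrightarrow> Hs l \<in> carrier_mat (K+1) (K+1)"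
    and HL: "\<And>l. l < n \<Longrightarrow> Q * transpose_mat Q * Hs l = Hs l"
    and HR: "\<And>l. l < n \<Longrightarrow> Hs l * (Q * transpose_mat Q) = Hs l"
    and x: "\<And>i. i < n \<Longrightarrow> x i \<in> carrier_vec p"
    and inv: "invertible_mat (msum (K * p) (K * p)
                 (\<lambda>l. kron (transpose_mat Q * Hs l * Q) (colm (x l) * rowm (x l))) {..<n})"
    and i: "i < n"
  shows "transpose_mat Q * Hs i * Q - kron (transpose_mat Q * Hs i * Q) (rowm (x i))
               * the (mat_inverse (msum (K * p) (K * p) (\<lambda>l. kron (transpose_mat Q * Hs l * Q) (colm (x l) * rowm (x l))) {..<n}))
               * kron (transpose_mat Q * Hs i * Q) (colm (x i))
     = transpose_mat Q * (Hs i - kron (Hs i) (rowm (x i))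
               * pinv (msum ((K+1) * p) ((K+1) * p) (\<lambda>l. kron (Hs l) (colm (x l) * rowm (x l))) {..<n})
               * kron (Hs i) (colm (x i))) * Q"
proof -
  define K1 where "K1 = K + 1"
  define H where "H = (\<lambda>l. transpose_mat Q * Hs l * Q)"
  define XX where "XX = (\<lambda>l. colm (x l) * rowm (x l))"
  define M where "M = msum (K * p) (K * p) (\<lambda>l. kron (H l) (XX l)) {..<n}"
  define S where "S = msum (K1 * p) (K1 * p) (\<lambda>l. kron (Hs l) (XX l)) {..<n}"
  define P where "P = kron Q (1\<^sub>m p)"
  define Pt where "Pt = kron (transpose_mat Q) (1\<^sub>m p)"
  have Qc: "Q \<in> carrier_mat K1 K" and Qt: "transpose_mat Q \<in> carrier_mat K K1" using Q unfolding K1_def by auto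
  have Hsc: "\<And>l. l < n \<Longrightarrow> Hs l \<in> carrier_mat K1 K1" using Hc unfolding K1_def by auto
  have Hq: "\<And>l. l < n \<Longrightarrow> H l \<in> carrier_mat K K" unfolding H_def using Qc Qt Hsc by (meson mult_carrier_mat)
  have XXc: "\<And>l. l < n \<Longrightarrow> XX l \<in> carrier_mat p p" unfolding XX_def using x by (meson colm_carrier rowm_carrier mult_carrier_mat)
  have Pc: "P \<in> carrier_mat (K1 * p) (K * p)" unfolding P_def using Qc by auto
  have Ptc: "Pt \<in> carrier_mat (K * p) (K1 * p)" unfolding Pt_def using Qt by auto
  have Mc: "M \<in> carrier_mat (K * p) (K * p)" unfolding M_def by simp
  have Sc: "S \<in> carrier_mat (K1 * p) (K1 * p)" unfolding S_def by simp
  have inv': "invertible_mat M" using inv unfolding M_def H_def XX_def .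
  obtain Minv where Mi: "M * Minv = 1\<^sub>m (K * p)" "Minv * M = 1\<^sub>m (K * p)" "Minv \<in> carrier_mat (K * p) (K * p)"
     "the (mat_inverse M) = Minv"
    using invertible_mat_inverse[OF Mc inv'] by metis
  have PtP: "Pt * P = 1\<^sub>m (K * p)"
    unfolding Pt_def P_def using kron_mult[OF Qt one_carrier_mat Qc one_carrier_mat] QtQ kron_one_one by simp
  have each: "P * kron (H l) (XX l) * Pt = kron (Hs l) (XX l)" if l: "l < n" for l
  proof -
    have "P * kron (H l) (XX l) = kron (Q * H l) (1\<^sub>m p * XX l)"
      unfolding P_def by (rule kron_mult[OF Qc one_carrier_mat Hq[OF l] XXc[OF l]])
    also have "\<dots> * Pt = kron (Q * H l * transpose_mat Q) (1\<^sub>m p * XX l * 1\<^sub>m p)"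
      unfolding Pt_def using Qc Hq[OF l] XXc[OF l] Qt by (intro kron_mult) auto
    also have "Q * H l * transpose_mat Q = (Q * transpose_mat Q * Hs l) * (Q * transpose_mat Q)"
    proof -
      have QtH: "transpose_mat Q * Hs l \<in> carrier_mat K K1" using Qt Hsc[OF l] by auto
      have QQ: "Q * transpose_mat Q \<in> carrier_mat K1 K1" using Qt Qc by auto
      have "Q * H l * transpose_mat Q = Q * (H l * transpose_mat Q)"
        by (rule assoc_mult_mat[OF Qc Hq[OF l] Qt])
      also have "H l * transpose_mat Q = (transpose_mat Q * Hs l) * (Q * transpose_mat Q)"
        unfolding H_def by (rule assoc_mult_mat[OF QtH Qc Qt])
      also have "Q * ((transpose_mat Q * Hs l) * (Q * transpose_mat Q)) = (Q * (transpose_mat Q * Hs l)) * (Q * transpose_mat Q)"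
        by (rule assoc_mult_mat[OF Qc QtH QQ, symmetric])
      also have "Q * (transpose_mat Q * Hs l) = Q * transpose_mat Q * Hs l"
        by (rule assoc_mult_mat[OF Qc Qt Hsc[OF l], symmetric])
      finally show ?thesis .
    qed
    also have "\<dots> = Hs l" using HL[OF l] HR[OF l] by simp
    also have "1\<^sub>m p * XX l * 1\<^sub>m p = XX l" using XXc[OF l] by simp
    finally show ?thesis .
  qed
  have SPMP: "S = P * M * Pt"
  proof -
    have "P * M * Pt = msum (K1 * p) (K * p) (\<lambda>l. P * kron (H l) (XX l)) {..<n} * Pt"
      unfolding M_def using Pc Hq XXc by (subst msum_mult_left[OF Pc]) auto
    also have "\<dots> = msum (K1 * p) (K1 * p) (\<lambda>l. P * kron (H l) (XX l) * Pt) {..<n}"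
      using Pc Hq XXc by (subst msum_mult_right[OF Ptc]) (auto intro!: mult_carrier_mat)
    also have "\<dots> = S" unfolding S_def using each by (intro msum_cong) auto
    finally show ?thesis by simp
  qed
  define X where "X = P * Minv * Pt"
  have Xc: "X \<in> carrier_mat (K1 * p) (K1 * p)" unfolding X_def using Pc Mi(3) Ptc by auto
  have PPt: "P * 1\<^sub>m (K * p) * Pt = kron (Q * transpose_mat Q) (1\<^sub>m p)"
    unfolding P_def Pt_def using kron_mult[OF Qc one_carrier_mat Qt one_carrier_mat] Qc by simp
  have sym: "transpose_mat (P * 1\<^sub>m (K * p) * Pt) = P * 1\<^sub>m (K * p) * Pt"
    unfolding PPt kron_transpose using transpose_mult[OF Qc Qt] by simp
  have SX: "S * X = P * 1\<^sub>m (K * p) * Pt" unfolding SPMP X_def using L1[OF Pc Ptc Mc Mi(3) PtP] Mi by simp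
  have XS: "X * S = P * 1\<^sub>m (K * p) * Pt" unfolding SPMP X_def using L1[OF Pc Ptc Mi(3) Mc PtP] Mi by simp
  have SXS: "S * X * S = S" unfolding SX unfolding SPMP using L1[OF Pc Ptc one_carrier_mat Mc PtP] Mc by simp
  have XSX: "X * S * X = X" unfolding XS unfolding X_def using L1[OF Pc Ptc one_carrier_mat Mi(3) PtP] Mi(3) by simp
  have pen: "penrose S X" unfolding penrose_def using Xc Sc SX XS SXS XSX sym by simp
  have pinvS: "pinv S = X" by (rule pinv_eq[OF Sc pen])
  define R where "R = kron (Hs i) (rowm (x i))"
  define C where "C = kron (Hs i) (colm (x i))"
  have Rc: "R \<in> carrier_mat K1 (K1 * p)" using kron_carrier[OF Hsc[OF i] rowm_carrier[OF x[OF i]]] unfolding R_def by simp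
  have Cc: "C \<in> carrier_mat (K1 * p) K1" using kron_carrier[OF Hsc[OF i] colm_carrier[OF x[OF i]]] unfolding C_def by simp
  have QtHs: "transpose_mat Q * Hs i \<in> carrier_mat K K1" using Qt Hsc[OF i] by auto
  have QtRP: "transpose_mat Q * R * P = kron (H i) (rowm (x i))"
  proof -
    have "transpose_mat Q * R = kron (transpose_mat Q) (1\<^sub>m 1) * R" by (subst kron_one_right) (rule refl)
    also have "\<dots> = kron (transpose_mat Q * Hs i) (1\<^sub>m 1 * rowm (x i))"
      unfolding R_def by (rule kron_mult[OF Qt one_carrier_mat Hsc[OF i] rowm_carrier[OF x[OF i]]])
    also have "\<dots> * P = kron (transpose_mat Q * Hs i * Q) (1\<^sub>m 1 * rowm (x i) * 1\<^sub>m p)"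
    proof -
      have r1: "1\<^sub>m 1 * rowm (x i) \<in> carrier_mat 1 p" using rowm_carrier[OF x[OF i]] by simp
      show ?thesis unfolding P_def by (rule kron_mult[OF QtHs r1 Qc one_carrier_mat])
    qed
    also have "1\<^sub>m 1 * rowm (x i) * 1\<^sub>m p = rowm (x i)"
      using left_mult_one_mat[OF rowm_carrier[OF x[OF i]]] right_mult_one_mat[OF rowm_carrier[OF x[OF i]]] by simp
    finally show ?thesis unfolding H_def .
  qed
  have PtCQ: "Pt * C * Q = kron (H i) (colm (x i))"
  proof -
    have e1: "Pt * C = kron (transpose_mat Q * Hs i) (1\<^sub>m p * colm (x i))"
      unfolding Pt_def C_def by (rule kron_mult[OF Qt one_carrier_mat Hsc[OF i] colm_carrier[OF x[OF i]]])
    have e2: "kron Q (1\<^sub>m 1) = Q" by (rule kron_one_right)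
    have e3: "kron (transpose_mat Q * Hs i) (1\<^sub>m p * colm (x i)) * kron Q (1\<^sub>m 1) = kron (transpose_mat Q * Hs i * Q) (1\<^sub>m p * colm (x i) * 1\<^sub>m 1)"
    proof -
      have r1: "1\<^sub>m p * colm (x i) \<in> carrier_mat p 1" using colm_carrier[OF x[OF i]] by simp
      show ?thesis by (rule kron_mult[OF QtHs r1 Qc one_carrier_mat])
    qed
    have e4: "1\<^sub>m p * colm (x i) * 1\<^sub>m 1 = colm (x i)"
      using left_mult_one_mat[OF colm_carrier[OF x[OF i]]] right_mult_one_mat[OF colm_carrier[OF x[OF i]]] by simp
    show ?thesis using e3 unfolding e1[symmetric] e2 e4 H_def .
  qed
  have RXC: "R * X * C \<in> carrier_mat K1 K1" using Rc Xc Cc by auto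
  have "transpose_mat Q * (Hs i - R * X * C) * Q = transpose_mat Q * Hs i * Q - transpose_mat Q * (R * X * C) * Q"
    using mult_minus_distrib_mat[OF Qt Hsc[OF i] RXC] minus_mult_distrib_mat[OF QtHs _ Qc] Qt RXC by auto
  also have "transpose_mat Q * (R * X * C) * Q = (transpose_mat Q * R * P) * Minv * (Pt * C * Q)"
    unfolding X_def by (rule L2[OF Qt Rc Pc Mi(3) Ptc Cc Qc])
  finally have fin: "transpose_mat Q * (Hs i - R * X * C) * Q = H i - kron (H i) (rowm (x i)) * Minv * kron (H i) (colm (x i))"
    unfolding QtRP PtCQ H_def .
  show ?thesis using fin Mi(4) pinvS unfolding R_def C_def X_def S_def M_def H_def XX_def K1_def by simp
qed

theorem lemmaS3p2:
  fixes K n p :: nat and Q Bh :: "real mat" and x y :: "nat \<Rightarrow> real vec"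
  assumes K: "K \<ge> 1"
    and Q: "Q \<in> carrier_mat (K+1) K"
    and QQt: "Q * transpose_mat Q = 1\<^sub>m (K+1) - (1 / real (K+1)) \<cdot>\<^sub>m mat (K+1) (K+1) (\<lambda>_. 1)"
    and QtQ: "transpose_mat Q * Q = 1\<^sub>m K"
    and x: "\<And>i. i < n \<Longrightarrow> x i \<in> carrier_vec p"
    and y: "\<And>i. i < n \<Longrightarrow> y i \<in> carrier_vec (K+1)"
    and Bh: "Bh \<in> carrier_mat p (K+1)"
    and minimizer: "\<And>B. B \<in> carrier_mat p (K+1) \<Longrightarrow>
        (\<Sum>i<n. mlloss (y i) (transpose_mat Bh *\<^sub>v x i)) \<le> (\<Sum>i<n. mlloss (y i) (transpose_mat B *\<^sub>v x i))"
    and inv: "invertible_mat (msum (K * p) (K * p)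
                 (\<lambda>l. kron (transpose_mat Q * Hsf Bh (x l) * Q) (colm (x l) * rowm (x l))) {..<n})"
  shows "\<forall>i<n.
    (let H = (\<lambda>l. transpose_mat Q * Hsf Bh (x l) * Q);
         Hs = (\<lambda>l. Hsf Bh (x l));
         V = H i - kron (H i) (rowm (x i))
               * the (mat_inverse (msum (K * p) (K * p) (\<lambda>l. kron (H l) (colm (x l) * rowm (x l))) {..<n}))
               * kron (H i) (colm (x i));
         Vs = Hs i - kron (Hs i) (rowm (x i))
               * pinv (msum ((K+1) * p) ((K+1) * p) (\<lambda>l. kron (Hs l) (colm (x l) * rowm (x l))) {..<n})
               * kron (Hs i) (colm (x i))
     in V = transpose_mat Q * Vs * Q)"
  proof (intro allI impI)
  fix i assume i: "i < n"
  have dc: "dim_col Bh = K + 1" using Bh by auto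
  have Hc: "\<And>l. l < n \<Longrightarrow> Hsf Bh (x l) \<in> carrier_mat (K+1) (K+1)"
    using Hsf_carrier[of Bh] dc by metis
  have HL: "Q * transpose_mat Q * Hsf Bh (x l) = Hsf Bh (x l)" if l: "l < n" for l
    unfolding QQt
    by (rule proj_left[OF Hc[OF l]]) (use Hsf_colsum[of _ Bh "x l"] dc in auto)
  have HR: "Hsf Bh (x l) * (Q * transpose_mat Q) = Hsf Bh (x l)" if l: "l < n" for l
    unfolding QQt
    by (rule proj_right[OF Hc[OF l]]) (use Hsf_rowsum[of _ Bh "x l"] dc in auto)
  show "let H = (\<lambda>l. transpose_mat Q * Hsf Bh (x l) * Q);
         Hs = (\<lambda>l. Hsf Bh (x l));
         V = H i - kron (H i) (rowm (x i))
               * the (mat_inverse (msum (K * p) (K * p) (\<lambda>l. kron (H l) (colm (x l) * rowm (x l))) {..<n}))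
               * kron (H i) (colm (x i));
         Vs = Hs i - kron (Hs i) (rowm (x i))
               * pinv (msum ((K+1) * p) ((K+1) * p) (\<lambda>l. kron (Hs l) (colm (x l) * rowm (x l))) {..<n})
               * kron (Hs i) (colm (x i))
     in V = transpose_mat Q * Vs * Q"
    unfolding Let_def
    by (rule helper[where Hs="\<lambda>l. Hsf Bh (x l)", OF Q QtQ Hc HL HR x inv i])
qed

end
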